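(* Consider the ring grooming instance with $n=9$, $c=1$ and traffic demands $\{1,2\},\{1,3\},\{2,3\},\{4,5\},\{4,6\},\{5,6\},\{7,8\},\{7,9\},\{8,9\}$ (each once). Then: (i) the minimum number of ADMs is $m=9$; (ii) every feasible routing achieving $9$ ADMs uses at least $3$ rings carrying traffic; (iii) there is a feasible routing using only $2$ rings carrying traffic; hence the number of rings carrying traffic and the number of ADMs cannot be minimized simultaneously for this instance.
   Context: Ring grooming. An instance consists of integers $n\ge 2$ (ring size) and $c\ge 1$ (capacity), and a finite list $L$ of unordered pairs $\{j,k\}$ with $j\ne k$, $j,k\in\{1,\dots,n\}$ (repetitions allowed); these are the traffic demands. Let $d_{jk}=d_{kj}$ be the number of times $\{j,k\}$ occurs in $L$ (the traffic matrix; $d_{jj}=0$). Let $C_n$ be the cycle graph on vertices $1,\dots,n$ in cyclic order, with edges $\{l,l+1\}$ for $1\le l<n$ and $\{n,1\}$. A solution uses some finite number $r$ of "rings", each a copy of $C_n$ in which every edge has capacity $c$. A routing specifies, for every ring $i$ and every pair $j<k$, nonnegative integers $t^0_{ijk},t^1_{ijk}$: the amounts of $\{j,k\}$-traffic sent on ring $i$ along each of the two arcs of $C_n$ between $j$ and $k$. It is feasible if $\sum_i (t^0_{ijk}+t^1_{ijk})=d_{jk}$ for all $j<k$, and for every ring $i$ and every edge $e$ of $C_n$ the total traffic routed on ring $i$ along arcs containing $e$ is at most $c$. Ring $i$ needs an ADM (add/drop multiplexer) at vertex $j$ iff some traffic with endpoint $j$ is routed on ring $i$. The cost of a routing is the total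 number of ADMs, i.e. the number of pairs (ring $i$, vertex $j$) at which an ADM is needed. $m=m(n,c,L)$ denotes the minimum cost over all feasible routings. *)

theory Defs
  imports Main
begin

text \<open>Vertices of the cycle C_n are 1..n. Edge l (1 \<le> l \<le> n) is
  {l, l+1} for l < n and {n, 1} for l = n. For a pair j < k, arc 0 between j and k is
  the path j, j+1, ..., k (edges l with j \<le> l < k); arc 1 is the complementary arc
  (edges l with l < j or k \<le> l). A routing with r rings is given by t0 t1, where
  t0 i j k / t1 i j k is the amount of {j,k}-traffic (j<k) routed on ring i (i<r)
  along arc 0 / arc 1. Entries outside the index range are irrelevant.\<close>

definition demand :: "(nat \<times> nat) list \<Rightarrow> nat \<Rightarrow> nat \<Rightarrow> nat" where
  "demand L j k = length (filter (\<lambda>p. p = (j, k) \<or> p = (k, j)) L)"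

definition arc0_has_edge :: "nat \<Rightarrow> nat \<Rightarrow> nat \<Rightarrow> bool" where
  "arc0_has_edge j k l \<longleftrightarrow> j \<le> l \<and> l < k"

definition arc1_has_edge :: "nat \<Rightarrow> nat \<Rightarrow> nat \<Rightarrow> bool" where
  "arc1_has_edge j k l \<longleftrightarrow> l < j \<or> k \<le> l"

definition pairs :: "nat \<Rightarrow> (nat \<times> nat) set" where
  "pairs n = {(j, k). 1 \<le> j \<and> j < k \<and> k \<le> n}"

definition edge_load :: "nat \<Rightarrow> (nat \<Rightarrow> nat \<Rightarrow> nat \<Rightarrow> nat) \<Rightarrow> (nat \<Rightarrow> nat \<Rightarrow> nat \<Rightarrow> nat)
    \<Rightarrow> nat \<Rightarrow> nat \<Rightarrow> nat" where
  "edge_load n t0 t1 i l =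
     (\<Sum>(j, k)\<in>pairs n. (if arc0_has_edge j k l then t0 i j k else 0)
                     + (if arc1_has_edge j k l then t1 i j k else 0))"

definition feasible_routing :: "nat \<Rightarrow> nat \<Rightarrow> (nat \<times> nat) list \<Rightarrow> nat
    \<Rightarrow> (nat \<Rightarrow> nat \<Rightarrow> nat \<Rightarrow> nat) \<Rightarrow> (nat \<Rightarrow> nat \<Rightarrow> nat \<Rightarrow> nat) \<Rightarrow> bool" where
  "feasible_routing n c L r t0 t1 \<longleftrightarrow>
     (\<forall>(j, k)\<in>pairs n. (\<Sum>i<r. t0 i j k + t1 i j k) = demand L j k) \<and>
     (\<forall>i<r. \<forall>l\<in>{1..n}. edge_load n t0 t1 i l \<le> c)"

definition needs_adm :: "nat \<Rightarrow> (nat \<Rightarrow> nat \<Rightarrow> nat \<Rightarrow> nat) \<Rightarrow> (nat \<Rightarrow> nat \<Rightarrow> nat \<Rightarrow> nat)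
    \<Rightarrow> nat \<Rightarrow> nat \<Rightarrow> bool" where
  "needs_adm n t0 t1 i v \<longleftrightarrow>
     (\<exists>(j, k)\<in>pairs n. (v = j \<or> v = k) \<and> t0 i j k + t1 i j k > 0)"

definition adm_cost :: "nat \<Rightarrow> nat \<Rightarrow> (nat \<Rightarrow> nat \<Rightarrow> nat \<Rightarrow> nat) \<Rightarrow> (nat \<Rightarrow> nat \<Rightarrow> nat \<Rightarrow> nat) \<Rightarrow> nat" where
  "adm_cost n r t0 t1 = card {(i, v). i < r \<and> v \<in> {1..n} \<and> needs_adm n t0 t1 i v}"

definition rings_carrying :: "nat \<Rightarrow> nat \<Rightarrow> (nat \<Rightarrow> nat \<Rightarrow> nat \<Rightarrow> nat) \<Rightarrow> (nat \<Rightarrow> nat \<Rightarrow> nat \<Rightarrow> nat) \<Rightarrow> nat" where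
  "rings_carrying n r t0 t1 =
     card {i. i < r \<and> (\<exists>(j, k)\<in>pairs n. t0 i j k + t1 i j k > 0)}"

definition min_adms :: "nat \<Rightarrow> nat \<Rightarrow> (nat \<times> nat) list \<Rightarrow> nat" where
  "min_adms n c L = (LEAST m. \<exists>r t0 t1. feasible_routing n c L r t0 t1 \<and> adm_cost n r t0 t1 = m)"

end

theory Submission
  imports Defs
begin
definition L0 :: "(nat \<times> nat) list" where
  "L0 = [(1,2),(1,3),(2,3),(4,5),(4,6),(5,6),(7,8),(7,9),(8,9)]"

definition P9 :: "(nat \<times> nat) set" where
  "P9 = {(1,2),(1,3),(2,3),(4,5),(4,6),(5,6),(7,8),(7,9),(8,9)}"

lemma v9: "(v::nat) \<in> {1..9} \<Longrightarrow> v=1 \<or> v=2 \<or> v=3 \<or> v=4 \<or> v=5 \<or> v=6 \<or> v=7 \<or> v=8 \<or> v=9"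
  by auto
lemma pairs9: "pairs 9 = {(1,2),(1,3),(1,4),(1,5),(1,6),(1,7),(1,8),(1,9),
  (2,3),(2,4),(2,5),(2,6),(2,7),(2,8),(2,9),
  (3,4),(3,5),(3,6),(3,7),(3,8),(3,9),
  (4,5),(4,6),(4,7),(4,8),(4,9),
  (5,6),(5,7),(5,8),(5,9),
  (6,7),(6,8),(6,9),
  (7,8),(7,9),(8,9)}" (is "_ = ?R")
proof
  show "pairs 9 \<subseteq> ?R"
  proof
    fix p assume "p \<in> pairs 9"
    then obtain j k where p: "p = (j,k)" "1 \<le> j" "j < k" "k \<le> 9" by (auto simp: pairs_def)
    then have "j \<in> {1..9}" "k \<in> {1..9}" by auto
    then have "j=1 \<or> j=2 \<or> j=3 \<or> j=4 \<or> j=5 \<or> j=6 \<or> j=7 \<or> j=8 \<or> j=9"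
      "k=1 \<or> k=2 \<or> k=3 \<or> k=4 \<or> k=5 \<or> k=6 \<or> k=7 \<or> k=8 \<or> k=9" using v9 by blast+
    then show "p \<in> ?R" using p(1,3) by (elim disjE) simp_all
  qed
qed (simp add: pairs_def)
lemma finite_pairs: "finite (pairs n)"
  by (rule finite_subset[of _ "{1..n} \<times> {1..n}"]) (auto simp: pairs_def)

lemma P9_pairs: "P9 \<subseteq> pairs 9"
  by (auto simp: P9_def pairs_def)

lemma demand_P9: "(j,k) \<in> P9 \<Longrightarrow> demand L0 j k = 1"
  unfolding P9_def by (simp only: insert_iff empty_iff prod.inject, elim disjE conjE) (simp_all add: L0_def demand_def)

lemma feas_pair:
  assumes "feasible_routing 9 1 L0 r t0 t1" "(j,k) \<in> P9"
  shows "(\<Sum>i<r. t0 i j k + t1 i j k) = 1"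
proof -
  have "(j,k) \<in> pairs 9" using assms(2) P9_pairs by blast
  then have "(\<Sum>i<r. t0 i j k + t1 i j k) = demand L0 j k"
    using assms(1) unfolding feasible_routing_def by fast
  then show ?thesis using demand_P9[OF assms(2)] by simp
qed

lemma ex_ring:
  fixes r :: nat
  assumes "(\<Sum>i<r. f i) = (1::nat)"
  obtains i where "i < r" "f i = 1"
proof -
  have "\<exists>i<r. f i > 0"
  proof (rule ccontr)
    assume "\<not> ?thesis"
    then have "(\<Sum>i<r. f i) = 0" by auto
    with assms show False by simp
  qed
  then obtain i where i: "i < r" "f i > 0" by auto
  have "f i \<le> (\<Sum>i<r. f i)" by (rule member_le_sum) (use i in auto)
  with i assms show ?thesis using that by auto
qed

lemma le_one:
  fixes r :: nat
  assumes "(\<Sum>i<r. f i) = (1::nat)" "i < r"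
  shows "f i \<le> 1"
proof -
  have "f i \<le> (\<Sum>i<r. f i)" by (rule member_le_sum) (use assms in auto)
  with assms show ?thesis by auto
qed

lemma adm_of:
  assumes "(j,k) \<in> P9" "t0 i j k + t1 i j k > 0"
  shows "needs_adm 9 t0 t1 i j" "needs_adm 9 t0 t1 i k"
proof -
  have jk: "(j,k) \<in> pairs 9" using assms(1) P9_pairs by blast
  show "needs_adm 9 t0 t1 i j" unfolding needs_adm_def
    by (rule bexI[OF _ jk]) (use assms(2) in auto)
  show "needs_adm 9 t0 t1 i k" unfolding needs_adm_def
    by (rule bexI[OF _ jk]) (use assms(2) in auto)
qed

lemma cover:
  assumes "feasible_routing 9 1 L0 r t0 t1" "v \<in> {1..9}"
  shows "\<exists>i<r. needs_adm 9 t0 t1 i v"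
proof -
  define w where "w = (if v mod 3 = 0 then v - 1 else v + 1)"
  have "(v, w) \<in> P9 \<or> (w, v) \<in> P9"
    using v9[OF assms(2)] unfolding w_def by (elim disjE) (simp_all add: P9_def)
  then have "\<exists>j k. (j,k) \<in> P9 \<and> (v = j \<or> v = k)" by blast
  then obtain j k where jk: "(j,k) \<in> P9" "v = j \<or> v = k" by blast
  obtain i where "i < r" "t0 i j k + t1 i j k = 1"
    using ex_ring[OF feas_pair[OF assms(1) jk(1)]] by blast
  then have "needs_adm 9 t0 t1 i j" "needs_adm 9 t0 t1 i k" using adm_of[OF jk(1), of t0 i t1] by auto
  then show ?thesis using jk(2) \<open>i < r\<close> by blast
qed

definition Sset where
  "Sset r t0 t1 = {(i, v). i < r \<and> v \<in> {1..9::nat} \<and> needs_adm 9 t0 t1 i v}"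

lemma Sset_fin: "finite (Sset r t0 t1)"
  by (rule finite_subset[of _ "{..<r} \<times> {1..9}"]) (auto simp: Sset_def)

lemma Sset_snd:
  assumes "feasible_routing 9 1 L0 r t0 t1"
  shows "snd ` Sset r t0 t1 = {1..9}"
proof
  show "snd ` Sset r t0 t1 \<subseteq> {1..9}" by (auto simp: Sset_def)
  show "{1..9} \<subseteq> snd ` Sset r t0 t1"
  proof
    fix v :: nat assume v: "v \<in> {1..9}"
    then obtain i where "i < r" "needs_adm 9 t0 t1 i v" using cover[OF assms] by blast
    then have "(i,v) \<in> Sset r t0 t1" using v by (auto simp: Sset_def)
    then show "v \<in> snd ` Sset r t0 t1" by force
  qed
qed

lemma cost_ge:
  assumes "feasible_routing 9 1 L0 r t0 t1"
  shows "adm_cost 9 r t0 t1 \<ge> 9"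
proof -
  have "card (snd ` Sset r t0 t1) \<le> card (Sset r t0 t1)" by (rule card_image_le[OF Sset_fin])
  then show ?thesis using Sset_snd[OF assms] unfolding adm_cost_def Sset_def by simp
qed


lemma load_ge:
  assumes "A \<subseteq> pairs n"
  shows "(\<Sum>(j, k)\<in>A. (if arc0_has_edge j k l then t0 i j k else 0)
                     + (if arc1_has_edge j k l then t1 i j k else 0)) \<le> edge_load n t0 t1 i l"
  unfolding edge_load_def by (rule sum_mono2[OF finite_pairs assms]) simp

lemma zo: "(x::nat) + y = 1 \<Longrightarrow> (x = 0 \<and> y = 1) \<or> (x = 1 \<and> y = 0)" by arith

lemma two_1_2:
  assumes load: "\<forall>l\<in>{1..9}. edge_load 9 t0 t1 a l \<le> 1"
    and e0: "t0 a 1 2 + t1 a 1 2 = 1"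
    and e1: "t0 a 1 3 + t1 a 1 3 = 1"
    and e2: "t0 a 2 3 + t1 a 2 3 = 1"
    and e3: "t0 a 4 5 + t1 a 4 5 = 1"
    and e4: "t0 a 4 6 + t1 a 4 6 = 1"
    and e5: "t0 a 5 6 + t1 a 5 6 = 1"
  shows False
proof -
  have A: "{(1,2),(1,3),(2,3),(4,5),(4,6),(5,6)} \<subseteq> pairs 9" by (simp add: pairs_def)
  have L: "\<And>l. l \<in> {1..9} \<Longrightarrow> (\<Sum>(j, k)\<in>{(1,2),(1,3),(2,3),(4,5),(4,6),(5,6)}. (if arc0_has_edge j k l then t0 a j k else 0) + (if arc1_has_edge j k l then t1 a j k else 0)) \<le> 1"
    using load_ge[OF A] load by (meson order_trans)
  have l1: "(\<Sum>(j, k)\<in>{(1,2),(1,3),(2,3),(4,5),(4,6),(5,6)}. (if arc0_has_edge j k 1 then t0 a j k else 0) + (if arc1_has_edge j k 1 then t1 a j k else 0)) \<le> 1" using L[of 1] by simp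
  have l2: "(\<Sum>(j, k)\<in>{(1,2),(1,3),(2,3),(4,5),(4,6),(5,6)}. (if arc0_has_edge j k 2 then t0 a j k else 0) + (if arc1_has_edge j k 2 then t1 a j k else 0)) \<le> 1" using L[of 2] by simp
  have l3: "(\<Sum>(j, k)\<in>{(1,2),(1,3),(2,3),(4,5),(4,6),(5,6)}. (if arc0_has_edge j k 3 then t0 a j k else 0) + (if arc1_has_edge j k 3 then t1 a j k else 0)) \<le> 1" using L[of 3] by simp
  have l4: "(\<Sum>(j, k)\<in>{(1,2),(1,3),(2,3),(4,5),(4,6),(5,6)}. (if arc0_has_edge j k 4 then t0 a j k else 0) + (if arc1_has_edge j k 4 then t1 a j k else 0)) \<le> 1" using L[of 4] by simp
  have l5: "(\<Sum>(j, k)\<in>{(1,2),(1,3),(2,3),(4,5),(4,6),(5,6)}. (if arc0_has_edge j k 5 then t0 a j k else 0) + (if arc1_has_edge j k 5 then t1 a j k else 0)) \<le> 1" using L[of 5] by simp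
  have l6: "(\<Sum>(j, k)\<in>{(1,2),(1,3),(2,3),(4,5),(4,6),(5,6)}. (if arc0_has_edge j k 6 then t0 a j k else 0) + (if arc1_has_edge j k 6 then t1 a j k else 0)) \<le> 1" using L[of 6] by simp
  have l7: "(\<Sum>(j, k)\<in>{(1,2),(1,3),(2,3),(4,5),(4,6),(5,6)}. (if arc0_has_edge j k 7 then t0 a j k else 0) + (if arc1_has_edge j k 7 then t1 a j k else 0)) \<le> 1" using L[of 7] by simp
  have l8: "(\<Sum>(j, k)\<in>{(1,2),(1,3),(2,3),(4,5),(4,6),(5,6)}. (if arc0_has_edge j k 8 then t0 a j k else 0) + (if arc1_has_edge j k 8 then t1 a j k else 0)) \<le> 1" using L[of 8] by simp
  have l9: "(\<Sum>(j, k)\<in>{(1,2),(1,3),(2,3),(4,5),(4,6),(5,6)}. (if arc0_has_edge j k 9 then t0 a j k else 0) + (if arc1_has_edge j k 9 then t1 a j k else 0)) \<le> 1" using L[of 9] by simp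
  note ls = l1 l2 l3 l4 l5 l6 l7 l8 l9
  show False using zo[OF e0] zo[OF e1] zo[OF e2] zo[OF e3] zo[OF e4] zo[OF e5] ls
    by (simp add: arc0_has_edge_def arc1_has_edge_def) (elim disjE conjE; simp)
qed

lemma two_1_3:
  assumes load: "\<forall>l\<in>{1..9}. edge_load 9 t0 t1 a l \<le> 1"
    and e0: "t0 a 1 2 + t1 a 1 2 = 1"
    and e1: "t0 a 1 3 + t1 a 1 3 = 1"
    and e2: "t0 a 2 3 + t1 a 2 3 = 1"
    and e3: "t0 a 7 8 + t1 a 7 8 = 1"
    and e4: "t0 a 7 9 + t1 a 7 9 = 1"
    and e5: "t0 a 8 9 + t1 a 8 9 = 1"
  shows False
proof -
  have A: "{(1,2),(1,3),(2,3),(7,8),(7,9),(8,9)} \<subseteq> pairs 9" by (simp add: pairs_def)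
  have L: "\<And>l. l \<in> {1..9} \<Longrightarrow> (\<Sum>(j, k)\<in>{(1,2),(1,3),(2,3),(7,8),(7,9),(8,9)}. (if arc0_has_edge j k l then t0 a j k else 0) + (if arc1_has_edge j k l then t1 a j k else 0)) \<le> 1"
    using load_ge[OF A] load by (meson order_trans)
  have l1: "(\<Sum>(j, k)\<in>{(1,2),(1,3),(2,3),(7,8),(7,9),(8,9)}. (if arc0_has_edge j k 1 then t0 a j k else 0) + (if arc1_has_edge j k 1 then t1 a j k else 0)) \<le> 1" using L[of 1] by simp
  have l2: "(\<Sum>(j, k)\<in>{(1,2),(1,3),(2,3),(7,8),(7,9),(8,9)}. (if arc0_has_edge j k 2 then t0 a j k else 0) + (if arc1_has_edge j k 2 then t1 a j k else 0)) \<le> 1" using L[of 2] by simp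
  have l3: "(\<Sum>(j, k)\<in>{(1,2),(1,3),(2,3),(7,8),(7,9),(8,9)}. (if arc0_has_edge j k 3 then t0 a j k else 0) + (if arc1_has_edge j k 3 then t1 a j k else 0)) \<le> 1" using L[of 3] by simp
  have l4: "(\<Sum>(j, k)\<in>{(1,2),(1,3),(2,3),(7,8),(7,9),(8,9)}. (if arc0_has_edge j k 4 then t0 a j k else 0) + (if arc1_has_edge j k 4 then t1 a j k else 0)) \<le> 1" using L[of 4] by simp
  have l5: "(\<Sum>(j, k)\<in>{(1,2),(1,3),(2,3),(7,8),(7,9),(8,9)}. (if arc0_has_edge j k 5 then t0 a j k else 0) + (if arc1_has_edge j k 5 then t1 a j k else 0)) \<le> 1" using L[of 5] by simp
  have l6: "(\<Sum>(j, k)\<in>{(1,2),(1,3),(2,3),(7,8),(7,9),(8,9)}. (if arc0_has_edge j k 6 then t0 a j k else 0) + (if arc1_has_edge j k 6 then t1 a j k else 0)) \<le> 1" using L[of 6] by simp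
  have l7: "(\<Sum>(j, k)\<in>{(1,2),(1,3),(2,3),(7,8),(7,9),(8,9)}. (if arc0_has_edge j k 7 then t0 a j k else 0) + (if arc1_has_edge j k 7 then t1 a j k else 0)) \<le> 1" using L[of 7] by simp
  have l8: "(\<Sum>(j, k)\<in>{(1,2),(1,3),(2,3),(7,8),(7,9),(8,9)}. (if arc0_has_edge j k 8 then t0 a j k else 0) + (if arc1_has_edge j k 8 then t1 a j k else 0)) \<le> 1" using L[of 8] by simp
  have l9: "(\<Sum>(j, k)\<in>{(1,2),(1,3),(2,3),(7,8),(7,9),(8,9)}. (if arc0_has_edge j k 9 then t0 a j k else 0) + (if arc1_has_edge j k 9 then t1 a j k else 0)) \<le> 1" using L[of 9] by simp
  note ls = l1 l2 l3 l4 l5 l6 l7 l8 l9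
  show False using zo[OF e0] zo[OF e1] zo[OF e2] zo[OF e3] zo[OF e4] zo[OF e5] ls
    by (simp add: arc0_has_edge_def arc1_has_edge_def) (elim disjE conjE; simp)
qed

lemma two_2_3:
  assumes load: "\<forall>l\<in>{1..9}. edge_load 9 t0 t1 a l \<le> 1"
    and e0: "t0 a 4 5 + t1 a 4 5 = 1"
    and e1: "t0 a 4 6 + t1 a 4 6 = 1"
    and e2: "t0 a 5 6 + t1 a 5 6 = 1"
    and e3: "t0 a 7 8 + t1 a 7 8 = 1"
    and e4: "t0 a 7 9 + t1 a 7 9 = 1"
    and e5: "t0 a 8 9 + t1 a 8 9 = 1"
  shows False
proof -
  have A: "{(4,5),(4,6),(5,6),(7,8),(7,9),(8,9)} \<subseteq> pairs 9" by (simp add: pairs_def)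
  have L: "\<And>l. l \<in> {1..9} \<Longrightarrow> (\<Sum>(j, k)\<in>{(4,5),(4,6),(5,6),(7,8),(7,9),(8,9)}. (if arc0_has_edge j k l then t0 a j k else 0) + (if arc1_has_edge j k l then t1 a j k else 0)) \<le> 1"
    using load_ge[OF A] load by (meson order_trans)
  have l1: "(\<Sum>(j, k)\<in>{(4,5),(4,6),(5,6),(7,8),(7,9),(8,9)}. (if arc0_has_edge j k 1 then t0 a j k else 0) + (if arc1_has_edge j k 1 then t1 a j k else 0)) \<le> 1" using L[of 1] by simp
  have l2: "(\<Sum>(j, k)\<in>{(4,5),(4,6),(5,6),(7,8),(7,9),(8,9)}. (if arc0_has_edge j k 2 then t0 a j k else 0) + (if arc1_has_edge j k 2 then t1 a j k else 0)) \<le> 1" using L[of 2] by simp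
  have l3: "(\<Sum>(j, k)\<in>{(4,5),(4,6),(5,6),(7,8),(7,9),(8,9)}. (if arc0_has_edge j k 3 then t0 a j k else 0) + (if arc1_has_edge j k 3 then t1 a j k else 0)) \<le> 1" using L[of 3] by simp
  have l4: "(\<Sum>(j, k)\<in>{(4,5),(4,6),(5,6),(7,8),(7,9),(8,9)}. (if arc0_has_edge j k 4 then t0 a j k else 0) + (if arc1_has_edge j k 4 then t1 a j k else 0)) \<le> 1" using L[of 4] by simp
  have l5: "(\<Sum>(j, k)\<in>{(4,5),(4,6),(5,6),(7,8),(7,9),(8,9)}. (if arc0_has_edge j k 5 then t0 a j k else 0) + (if arc1_has_edge j k 5 then t1 a j k else 0)) \<le> 1" using L[of 5] by simp
  have l6: "(\<Sum>(j, k)\<in>{(4,5),(4,6),(5,6),(7,8),(7,9),(8,9)}. (if arc0_has_edge j k 6 then t0 a j k else 0) + (if arc1_has_edge j k 6 then t1 a j k else 0)) \<le> 1" using L[of 6] by simp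
  have l7: "(\<Sum>(j, k)\<in>{(4,5),(4,6),(5,6),(7,8),(7,9),(8,9)}. (if arc0_has_edge j k 7 then t0 a j k else 0) + (if arc1_has_edge j k 7 then t1 a j k else 0)) \<le> 1" using L[of 7] by simp
  have l8: "(\<Sum>(j, k)\<in>{(4,5),(4,6),(5,6),(7,8),(7,9),(8,9)}. (if arc0_has_edge j k 8 then t0 a j k else 0) + (if arc1_has_edge j k 8 then t1 a j k else 0)) \<le> 1" using L[of 8] by simp
  have l9: "(\<Sum>(j, k)\<in>{(4,5),(4,6),(5,6),(7,8),(7,9),(8,9)}. (if arc0_has_edge j k 9 then t0 a j k else 0) + (if arc1_has_edge j k 9 then t1 a j k else 0)) \<le> 1" using L[of 9] by simp
  note ls = l1 l2 l3 l4 l5 l6 l7 l8 l9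
  show False using zo[OF e0] zo[OF e1] zo[OF e2] zo[OF e3] zo[OF e4] zo[OF e5] ls
    by (simp add: arc0_has_edge_def arc1_has_edge_def) (elim disjE conjE; simp)
qed


lemma inj_S:
  assumes f: "feasible_routing 9 1 L0 r t0 t1" and c: "adm_cost 9 r t0 t1 = 9"
    and "a < r" "b < r" "needs_adm 9 t0 t1 a v" "needs_adm 9 t0 t1 b v" "v \<in> {1..9}"
  shows "a = b"
proof -
  have "card (Sset r t0 t1) = 9" using c unfolding adm_cost_def Sset_def by simp
  then have "card (snd ` Sset r t0 t1) = card (Sset r t0 t1)" using Sset_snd[OF f] by simp
  then have "inj_on snd (Sset r t0 t1)" using inj_on_iff_eq_card[OF Sset_fin] by blast
  moreover have "(a,v) \<in> Sset r t0 t1" "(b,v) \<in> Sset r t0 t1" using assms by (auto simp: Sset_def)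
  ultimately show ?thesis by (metis inj_on_contraD prod.inject snd_conv)
qed

lemma tri:
  assumes f: "feasible_routing 9 1 L0 r t0 t1" and c: "adm_cost 9 r t0 t1 = 9"
    and P: "(p,q) \<in> P9" "(p,s) \<in> P9" "(q,s) \<in> P9"
  shows "\<exists>a<r. t0 a p q + t1 a p q = 1 \<and> t0 a p s + t1 a p s = 1 \<and> t0 a q s + t1 a q s = 1"
proof -
  obtain a where a: "a < r" "t0 a p q + t1 a p q = 1" using ex_ring[OF feas_pair[OF f P(1)]] by blast
  obtain b where b: "b < r" "t0 b p s + t1 b p s = 1" using ex_ring[OF feas_pair[OF f P(2)]] by blast
  obtain d where d: "d < r" "t0 d q s + t1 d q s = 1" using ex_ring[OF feas_pair[OF f P(3)]] by blast
  have pq: "p \<in> {1..9}" "q \<in> {1..9}" using P(1) P9_pairs by (auto simp: pairs_def)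
  have "needs_adm 9 t0 t1 a p" "needs_adm 9 t0 t1 a q" using adm_of[OF P(1), of t0 a t1] a by auto
  moreover have "needs_adm 9 t0 t1 b p" using adm_of[OF P(2), of t0 b t1] b by auto
  moreover have "needs_adm 9 t0 t1 d q" using adm_of[OF P(3), of t0 d t1] d by auto
  ultimately have "a = b" "a = d" using inj_S[OF f c] a b d pq by blast+
  then show ?thesis using a b d by auto
qed

lemma ring_load: "feasible_routing 9 1 L0 r t0 t1 \<Longrightarrow> a < r \<Longrightarrow> \<forall>l\<in>{1..9}. edge_load 9 t0 t1 a l \<le> 1"
  unfolding feasible_routing_def by blast

lemma partii:
  assumes f: "feasible_routing 9 1 L0 r t0 t1" and c: "adm_cost 9 r t0 t1 = 9"
  shows "rings_carrying 9 r t0 t1 \<ge> 3"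
proof -
  obtain a where a: "a<r" "t0 a 1 2 + t1 a 1 2 = 1" "t0 a 1 3 + t1 a 1 3 = 1" "t0 a 2 3 + t1 a 2 3 = 1"
    using tri[OF f c, of 1 2 3] by (auto simp: P9_def)
  obtain b where b: "b<r" "t0 b 4 5 + t1 b 4 5 = 1" "t0 b 4 6 + t1 b 4 6 = 1" "t0 b 5 6 + t1 b 5 6 = 1"
    using tri[OF f c, of 4 5 6] by (auto simp: P9_def)
  obtain d where d: "d<r" "t0 d 7 8 + t1 d 7 8 = 1" "t0 d 7 9 + t1 d 7 9 = 1" "t0 d 8 9 + t1 d 8 9 = 1"
    using tri[OF f c, of 7 8 9] by (auto simp: P9_def)
  have "a \<noteq> b"
  proof
    assume "a = b" then show False using two_1_2[OF ring_load[OF f a(1)]] a b by simp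
  qed
  moreover have "a \<noteq> d"
  proof
    assume "a = d" then show False using two_1_3[OF ring_load[OF f a(1)]] a d by simp
  qed
  moreover have "b \<noteq> d"
  proof
    assume "b = d" then show False using two_2_3[OF ring_load[OF f b(1)]] b d by simp
  qed
  moreover have "{a,b,d} \<subseteq> {i. i < r \<and> (\<exists>(j, k)\<in>pairs 9. t0 i j k + t1 i j k > 0)}"
  proof -
    have "\<exists>(j, k)\<in>pairs 9. t0 a j k + t1 a j k > 0"
      by (rule bexI[of _ "(1,2)"]) (use a in \<open>auto simp: pairs_def\<close>)
    moreover have "\<exists>(j, k)\<in>pairs 9. t0 b j k + t1 b j k > 0"
      by (rule bexI[of _ "(4,5)"]) (use b in \<open>auto simp: pairs_def\<close>)
    moreover have "\<exists>(j, k)\<in>pairs 9. t0 d j k + t1 d j k > 0"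
      by (rule bexI[of _ "(7,8)"]) (use d in \<open>auto simp: pairs_def\<close>)
    ultimately show ?thesis using a(1) b(1) d(1) by blast
  qed
  moreover have "finite {i. i < r \<and> (\<exists>(j, k)\<in>pairs 9. t0 i j k + t1 i j k > 0)}" by simp
  ultimately have "card {a,b,d} \<le> rings_carrying 9 r t0 t1"
    unfolding rings_carrying_def by (meson card_mono)
  moreover have "card {a,b,d} = 3" using \<open>a\<noteq>b\<close> \<open>a\<noteq>d\<close> \<open>b\<noteq>d\<close> by simp
  ultimately show ?thesis by simp
qed


definition PL :: "(nat \<times> nat) list" where
  "PL = [(1,2),(1,3),(1,4),(1,5),(1,6),(1,7),(1,8),(1,9),
  (2,3),(2,4),(2,5),(2,6),(2,7),(2,8),(2,9),
  (3,4),(3,5),(3,6),(3,7),(3,8),(3,9),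
  (4,5),(4,6),(4,7),(4,8),(4,9),
  (5,6),(5,7),(5,8),(5,9),
  (6,7),(6,8),(6,9),
  (7,8),(7,9),(8,9)]"

lemma pairs_PL: "pairs 9 = set PL" unfolding pairs9 PL_def by simp

lemma load_list: "edge_load 9 t0 t1 i l = sum_list (map (\<lambda>(j, k). (if arc0_has_edge j k l then t0 i j k else 0)
                     + (if arc1_has_edge j k l then t1 i j k else 0)) PL)"
proof -
  have "distinct PL" by (simp add: PL_def)
  then show ?thesis unfolding edge_load_def pairs_PL by (rule sum.distinct_set_conv_list)
qed

lemma sum3: "(\<Sum>i<3::nat. f i) = f 0 + f 1 + (f 2 :: nat)" by (simp add: eval_nat_numeral)
lemma sum2: "(\<Sum>i<2::nat. f i) = f 0 + (f 1 :: nat)" by (simp add: eval_nat_numeral)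

definition A0 :: "nat \<Rightarrow> nat \<Rightarrow> nat \<Rightarrow> nat" where
  "A0 i j k = (if (i,j,k) \<in> {(0,1,2),(0,2,3),(1,4,5),(1,5,6),(2,7,8),(2,8,9)} then 1 else 0)"
definition A1 :: "nat \<Rightarrow> nat \<Rightarrow> nat \<Rightarrow> nat" where
  "A1 i j k = (if (i,j,k) \<in> {(0,1,3),(1,4,6),(2,7,9)} then 1 else 0)"
definition B0 :: "nat \<Rightarrow> nat \<Rightarrow> nat \<Rightarrow> nat" where
  "B0 i j k = (if (i,j,k) \<in> {(0,1,2),(0,2,3),(0,4,5),(0,5,6),(0,7,8),(0,8,9),(1,1,3),(1,4,6),(1,7,9)} then 1 else 0)"
definition B1 :: "nat \<Rightarrow> nat \<Rightarrow> nat \<Rightarrow> nat" where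
  "B1 i j k = 0"

lemma i3: "(i::nat) < 3 \<Longrightarrow> i = 0 \<or> i = 1 \<or> i = 2" by auto
lemma i2: "(i::nat) < 2 \<Longrightarrow> i = 0 \<or> i = 1" by auto

lemma featA: "feasible_routing 9 1 L0 3 A0 A1"
  unfolding feasible_routing_def
proof (rule conjI)
  show "\<forall>(j, k)\<in>pairs 9. (\<Sum>i<3. A0 i j k + A1 i j k) = demand L0 j k"
    unfolding pairs9 sum3 by (simp add: A0_def A1_def demand_def L0_def)
next
  show "\<forall>i<3. \<forall>l\<in>{1..9}. edge_load 9 A0 A1 i l \<le> 1"
  proof (intro allI impI ballI)
  fix i l assume il: "i < (3::nat)" "l \<in> {1..(9::nat)}"
  show "edge_load 9 A0 A1 i l \<le> 1" using i3[OF il(1)] v9[OF il(2)]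
    by (elim disjE; simp add: load_list PL_def A0_def A1_def arc0_has_edge_def arc1_has_edge_def)
  qed
qed

lemma featB: "feasible_routing 9 1 L0 2 B0 B1"
  unfolding feasible_routing_def
proof (rule conjI)
  show "\<forall>(j, k)\<in>pairs 9. (\<Sum>i<2. B0 i j k + B1 i j k) = demand L0 j k"
    unfolding pairs9 sum2 by (simp add: B0_def B1_def demand_def L0_def)
next
  show "\<forall>i<2. \<forall>l\<in>{1..9}. edge_load 9 B0 B1 i l \<le> 1"
  proof (intro allI impI ballI)
  fix i l assume il: "i < (2::nat)" "l \<in> {1..(9::nat)}"
  show "edge_load 9 B0 B1 i l \<le> 1" using i2[OF il(1)] v9[OF il(2)]
    by (elim disjE; simp add: load_list PL_def B0_def B1_def arc0_has_edge_def arc1_has_edge_def)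
  qed
qed


lemma costA_le: "adm_cost 9 3 A0 A1 \<le> 9"
proof -
  let ?T = "{(0,1),(0,2),(0,3),(1,4),(1,5),(1,6),(2,7),(2,8),(2,9)} :: (nat \<times> nat) set"
  have "Sset 3 A0 A1 \<subseteq> ?T"
  proof
    fix x assume "x \<in> Sset 3 A0 A1"
    then obtain i v where x: "x = (i,v)" "i < 3" "v \<in> {1..9}" "needs_adm 9 A0 A1 i v"
      by (auto simp: Sset_def)
    show "x \<in> ?T" using i3[OF x(2)] v9[OF x(3)] x(4) unfolding x(1)
      by (elim disjE; simp add: needs_adm_def pairs9 A0_def A1_def)
  qed
  then have "card (Sset 3 A0 A1) \<le> card ?T" by (rule card_mono[rotated]) simp
  then show ?thesis unfolding adm_cost_def Sset_def by simp
qed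

lemma costA: "adm_cost 9 3 A0 A1 = 9"
  using costA_le cost_ge[OF featA] by simp

lemma min9: "min_adms 9 1 L0 = 9"
  unfolding min_adms_def
proof (rule Least_equality)
  show "\<exists>r t0 t1. feasible_routing 9 1 L0 r t0 t1 \<and> adm_cost 9 r t0 t1 = 9"
    using featA costA by blast
next
  fix y assume "\<exists>r t0 t1. feasible_routing 9 1 L0 r t0 t1 \<and> adm_cost 9 r t0 t1 = y"
  then show "9 \<le> y" using cost_ge by blast
qed

lemma ringsB: "rings_carrying 9 2 B0 B1 = 2"
proof -
  have "{i. i < 2 \<and> (\<exists>(j, k)\<in>pairs 9. B0 i j k + B1 i j k > 0)} = {0, 1}"
  proof
    show "{i. i < 2 \<and> (\<exists>(j, k)\<in>pairs 9. B0 i j k + B1 i j k > 0)} \<subseteq> {0, 1}" by auto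
    have "\<exists>(j, k)\<in>pairs 9. B0 0 j k + B1 0 j k > 0"
      by (rule bexI[of _ "(1,2)"]) (auto simp: pairs_def B0_def B1_def)
    moreover have "\<exists>(j, k)\<in>pairs 9. B0 1 j k + B1 1 j k > 0"
      by (rule bexI[of _ "(1,3)"]) (auto simp: pairs_def B0_def B1_def)
    ultimately show "{0, 1} \<subseteq> {i. i < 2 \<and> (\<exists>(j, k)\<in>pairs 9. B0 i j k + B1 i j k > 0)}" by auto
  qed
  then show ?thesis unfolding rings_carrying_def by simp
qed

theorem mainTheorem5:
  fixes L :: "(nat \<times> nat) list"
  assumes "L = [(1,2),(1,3),(2,3),(4,5),(4,6),(5,6),(7,8),(7,9),(8,9)]"
  shows "min_adms 9 1 L = 9
    \<and> (\<forall>r t0 t1. feasible_routing 9 1 L r t0 t1 \<and> adm_cost 9 r t0 t1 = 9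
          \<longrightarrow> rings_carrying 9 r t0 t1 \<ge> 3)
    \<and> (\<exists>r t0 t1. feasible_routing 9 1 L r t0 t1 \<and> rings_carrying 9 r t0 t1 = 2)"
proof -
  have L: "L = L0" using assms by (simp add: L0_def)
  show ?thesis unfolding L using min9 partii featB ringsB by blast
qed
end
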